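(* Let $p$ be a prime, $d \geq 1$, $V = \mathbb{F}_p^d$, let $G \leq \mathrm{GL}(V)$ be an irreducible linear group on $V$, and let $\Delta \subseteq V$ be a $G$-invariant subset. If for some integer $m \geq 1$ the sumset $m \cdot \Delta$ contains a line $b + \mathbb{F}_p v = \{ b + \lambda v \mid \lambda \in \mathbb{F}_p\}$ for some $b \in V$ and nonzero $v \in V$, then $dm \cdot \Delta = V$.
   Context: For a subset $\Delta \subseteq V$ and a positive integer $n$, $n \cdot \Delta$ denotes the $n$-fold sumset $\{\delta_1 + \dots + \delta_n \mid \delta_1, \dots, \delta_n \in \Delta\}$. *)

theory Defs
  imports "HOL-Analysis.Analysis" "HOL-Computational_Algebra.Primes"
begin

text \<open>V = k^n where k is a finite field of prime order p (so k is F_p), and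
  d = CARD('n). Linear maps of V are matrices acting by *v.\<close>

definition nfold_sumset :: "nat \<Rightarrow> ('k::comm_monoid_add ^ 'n) set \<Rightarrow> ('k ^ 'n) set" where
  "nfold_sumset m D = {(\<Sum>i<m. f i) | f. \<forall>i<m. f i \<in> D}"

definition linear_group :: "('k::field ^ 'n ^ 'n) set \<Rightarrow> bool" where
  "linear_group G \<longleftrightarrow> mat 1 \<in> G \<and> (\<forall>A\<in>G. invertible A) \<and>
     (\<forall>A\<in>G. \<forall>B\<in>G. A ** B \<in> G) \<and> (\<forall>A\<in>G. matrix_inv A \<in> G)"

definition lin_subspace :: "('k::field ^ 'n) set \<Rightarrow> bool" where
  "lin_subspace W \<longleftrightarrow> 0 \<in> W \<and> (\<forall>x\<in>W. \<forall>y\<in>W. x + y \<in> W) \<and> (\<forall>c. \<forall>x\<in>W. c *s x \<in> W)"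

definition G_invariant :: "('k::field ^ 'n ^ 'n) set \<Rightarrow> ('k ^ 'n) set \<Rightarrow> bool" where
  "G_invariant G S \<longleftrightarrow> (\<forall>A\<in>G. \<forall>x\<in>S. A *v x \<in> S)"

definition irreducible_linear_group :: "('k::field ^ 'n ^ 'n) set \<Rightarrow> bool" where
  "irreducible_linear_group G \<longleftrightarrow> linear_group G \<and>
     (\<forall>W. lin_subspace W \<and> G_invariant G W \<longrightarrow> W = {0} \<or> W = UNIV)"

end

theory Submission
  imports Defs
begin

lemma nfold_zero: "0 \<in> nfold_sumset 0 D"
  unfolding nfold_sumset_def by auto

lemma nfold_add:
  assumes "a \<in> nfold_sumset m D" "c \<in> nfold_sumset k D"
  shows "a + c \<in> nfold_sumset (m + k) D"
proof -
  obtain f where f: "a = (\<Sum>i<m. f i)" "\<forall>i<m. f i \<in> D" using assms(1) unfolding nfold_sumset_def by auto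
  obtain g where g: "c = (\<Sum>i<k. g i)" "\<forall>i<k. g i \<in> D" using assms(2) unfolding nfold_sumset_def by auto
  define h where "h i = (if i < m then f i else g (i - m))" for i
  have gen: "(\<Sum>i<m+j. h i) = (\<Sum>i<m. h i) + (\<Sum>i<j. h (m + i))" for j
    by (induction j) (simp_all add: ac_simps)
  have "(\<Sum>i<m+k. h i) = (\<Sum>i<m. h i) + (\<Sum>i<k. h (m + i))" by (rule gen)
  also have "\<dots> = a + c" unfolding h_def f g by simp
  finally have "a + c = (\<Sum>i<m+k. h i)" by simp
  moreover have "\<forall>i<m+k. h i \<in> D" using f g unfolding h_def by auto
  ultimately show ?thesis unfolding nfold_sumset_def by blast
qed

lemma nfold_image:
  fixes A :: "'k::field ^ 'n ^ 'n"
  assumes "\<forall>x\<in>D. A *v x \<in> D" "x \<in> nfold_sumset m D"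
  shows "A *v x \<in> nfold_sumset m D"
proof -
  obtain f where f: "x = (\<Sum>i<m. f i)" "\<forall>i<m. f i \<in> D" using assms(2) unfolding nfold_sumset_def by auto
  have "A *v x = (\<Sum>i<m. A *v f i)" unfolding f by (simp add: vec.sum)
  moreover have "\<forall>i<m. A *v f i \<in> D" using f assms(1) by auto
  ultimately show ?thesis unfolding nfold_sumset_def by blast
qed

lemma nfold_sum:
  assumes "finite B" "\<forall>w\<in>B. h w \<in> nfold_sumset m D"
  shows "sum h B \<in> nfold_sumset (card B * m) D"
  using assms
proof (induction B rule: finite_induct)
  case empty
  then show ?case using nfold_zero by simp
next
  case (insert x F)
  then have "h x + sum h F \<in> nfold_sumset (m + card F * m) D"
    by (intro nfold_add) auto
  then show ?case using insert by simp
qed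

theorem lemma2p1:
  fixes G :: "('k::{field,finite} ^ 'n ^ 'n) set"
    and \<Delta> :: "('k ^ 'n) set"
    and m :: nat and b v :: "'k ^ 'n"
  assumes "prime CARD('k)"
    and "irreducible_linear_group G"
    and "G_invariant G \<Delta>"
    and "m \<ge> 1"
    and "v \<noteq> 0"
    and "{b + c *s v | c. True} \<subseteq> nfold_sumset m \<Delta>"
  shows "nfold_sumset (CARD('n) * m) \<Delta> = UNIV"
proof -
  have lg: "linear_group G" using assms(2) unfolding irreducible_linear_group_def by auto
  define S where "S = (\<lambda>A. A *v v) ` G"
  define W where "W = vec.span S"
  have vS: "v \<in> S" unfolding S_def using lg unfolding linear_group_def
    by (metis image_eqI matrix_vector_mul_lid)
  have "lin_subspace W" unfolding lin_subspace_def W_def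
    by (auto intro: vec.span_zero vec.span_add vec.span_scale)
  moreover have "G_invariant G W" unfolding G_invariant_def
  proof (intro ballI)
    fix A x assume A: "A \<in> G" and x: "x \<in> W"
    have "(*v) A ` S \<subseteq> S" using A lg unfolding S_def linear_group_def
      by (auto simp: matrix_vector_mul_assoc)
    hence "vec.span ((*v) A ` S) \<subseteq> W" unfolding W_def by (rule vec.span_mono)
    moreover have "A *v x \<in> vec.span ((*v) A ` S)" using x unfolding W_def vec.span_image by auto
    ultimately show "A *v x \<in> W" by auto
  qed
  ultimately have "W = {0} \<or> W = UNIV" using assms(2) unfolding irreducible_linear_group_def by auto
  moreover have "v \<in> W" unfolding W_def using vS by (rule vec.span_base)
  ultimately have WU: "W = UNIV" using assms(5) by auto
  obtain B where B: "B \<subseteq> S" "vec.independent B" "S \<subseteq> vec.span B"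
    using vec.maximal_independent_subset by blast
  have spanB: "vec.span B = UNIV" using WU B unfolding W_def
    by (metis top.extremum_uniqueI vec.span_minimal vec.subspace_span)
  have finB: "finite B" using B(2) by (rule vec.finiteI_independent)
  have cardB: "card B = CARD('n)"
    using vec.basis_card_eq_dim[of B UNIV] B(2) spanB vec.dim_UNIV card_cart_basis by auto
  have "\<forall>w\<in>B. \<exists>A\<in>G. w = A *v v" using B(1) unfolding S_def by auto
  then obtain g where g: "\<forall>w\<in>B. g w \<in> G \<and> w = g w *v v" by metis
  have line: "b + c *s v \<in> nfold_sumset m \<Delta>" for c using assms(6) by auto
  have inv: "\<forall>x\<in>\<Delta>. A *v x \<in> \<Delta>" if "A \<in> G" for A
    using assms(3) that unfolding G_invariant_def by auto
  show ?thesis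
  proof (intro set_eqI iffI)
    fix x :: "'k ^ 'n"
    show "x \<in> UNIV" by simp
    have "x - (\<Sum>w\<in>B. g w *v b) \<in> vec.span B" using spanB by auto
    then obtain u where u: "x - (\<Sum>w\<in>B. g w *v b) = (\<Sum>w\<in>B. u w *s w)"
      unfolding vec.span_finite[OF finB] by auto
    have "x = (\<Sum>w\<in>B. g w *v b) + (\<Sum>w\<in>B. u w *s w)" using u by (simp add: algebra_simps)
    also have "\<dots> = (\<Sum>w\<in>B. g w *v (b + u w *s v))"
      using g by (simp add: sum.distrib[symmetric] matrix_vector_right_distrib vector_scalar_commute)
    finally have xe: "x = (\<Sum>w\<in>B. g w *v (b + u w *s v))" .
    have "\<forall>w\<in>B. g w *v (b + u w *s v) \<in> nfold_sumset m \<Delta>"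
      using g line inv nfold_image by blast
    then have "x \<in> nfold_sumset (card B * m) \<Delta>" unfolding xe by (rule nfold_sum[OF finB])
    then show "x \<in> nfold_sumset (CARD('n) * m) \<Delta>" using cardB by simp
  qed
qed

end
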